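(* Let $\psi$, $s_0$ and $r=r_\psi$ be as in the context, and let $C_r\ge1$ and $s_*$ be such that $r(s_2)\le C_rr(s_1)$ whenever $s_*\le s_1\le s_2\le s_1+s_1^\eta$. For each integer $k\ge s_0$ define $$\overline E_k=\{A\in M_{m,n}(\mathbb R/\mathbb Z): g_k\Lambda_A\in\widetilde\Delta_{\omega_1C_rr(k)}\},\qquad \underline E_k=\{A\in M_{m,n}(\mathbb R/\mathbb Z): g_k\Lambda_A\in\widetilde\Delta_{\omega_2C_r^{-1}r(k+1)}\}.$$ Then $\limsup_{k\to\infty}\underline E_k\subset \mathbf{DI}_{\boldsymbol\alpha,\boldsymbol\beta}(\psi)^c\subset\limsup_{k\to\infty}\overline E_k$.
   Context: $d=m+n$; weight vectors $\boldsymbol\alpha\in(\mathbb R_{>0})^m$, $\boldsymbol\beta\in(\mathbb R_{>0})^n$ with coordinates summing to 1; $\omega_1=\max\{m\alpha_i,n\beta_j\}$, $\omega_2=\min\{m\alpha_i,n\beta_j\}$. $g_s=\mathrm{diag}(e^{\alpha_1s},\dots,e^{\alpha_ms},e^{-\beta_1s},\dots,e^{-\beta_ns})$; $\Lambda_A=\begin{pmatrix}I_m&A\\0&I_n\end{pmatrix}\mathbb Z^d$. $X_d$ is the space of unimodular lattices in $\mathbb R^d$; $\Delta(\Lambda)=\sup_{\mathbf v\in\Lambda\setminus\{0\}}\log(1/\|\mathbf v\|)$ (sup norm); $\widetilde\Delta_\rho:=\bigcup_{0\le s<1}g_{-s}\Delta^{-1}[0,\rho]$. Standing assumptions on $\psi$: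 $t_0>1$, $\psi:[t_0,\infty)\to(0,\infty)$ continuous and decreasing, $\frac1{2t}\le\psi(t)<\frac1t$, and there exist $C_\psi\ge1,\eta\in(0,1)$ with $F_\psi(t_2)\le C_\psi F_\psi(t_1)$ for $t_0\le t_1\le t_2\le t_1e^{(\log t_1)^\eta}$, $F_\psi(t)=1-t\psi(t)$. $s_0=\frac md\log t_0-\frac nd\log\psi(t_0)$, and $r(s)=-\frac1d\log(t\psi(t))$ where $t=t(s)$ solves $s=\frac md\log t-\frac nd\log\psi(t)$ (such $C_r,s_*$ exist). $\mathbf{DI}_{\boldsymbol\alpha,\boldsymbol\beta}(\psi)\subset M_{m,n}(\mathbb R/\mathbb Z)$ is the set of $A$ such that for all sufficiently large $t$ there exist $\mathbf p\in\mathbb Z^m,\mathbf q\in\mathbb Z^n\setminus\{0\}$ with $\max_i|(A\mathbf q-\mathbf p)_i|^{1/\alpha_i}<\psi(t)$ and $\max_j|q_j|^{1/\beta_j}<t$. *)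

theory Defs
  imports "HOL-Analysis.Analysis"
begin

text \<open>Vectors of R^d, d = m + n, are represented as pairs (x, y) with
  x :: real^'m and y :: real^'n.  Matrices A in M_{m,n} are real^'n^'m
  (m rows, n columns); sets of matrices in M_{m,n}(R/Z) are represented by
  their (Z-periodic) preimages in M_{m,n}(R).\<close>

definition intvecs :: "(real^'k) set" where
  "intvecs = {v. \<forall>i. v $ i \<in> \<int>}"

definition supn :: "(real^'m) \<times> (real^'n) \<Rightarrow> real" where
  "supn v = max (Max (range (\<lambda>i. \<bar>fst v $ i\<bar>))) (Max (range (\<lambda>j. \<bar>snd v $ j\<bar>)))"

definition LambdaA :: "real^'n^'m \<Rightarrow> ((real^'m) \<times> (real^'n)) set" where
  "LambdaA A = {(x + A *v y, y) | x y. x \<in> intvecs \<and> y \<in> intvecs}"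

definition gflow :: "real^'m \<Rightarrow> real^'n \<Rightarrow> real \<Rightarrow> (real^'m) \<times> (real^'n) \<Rightarrow> (real^'m) \<times> (real^'n)" where
  "gflow \<alpha> \<beta> s v = ((\<chi> i. exp (\<alpha> $ i * s) * fst v $ i), (\<chi> j. exp (- (\<beta> $ j * s)) * snd v $ j))"

definition Delta :: "((real^'m) \<times> (real^'n)) set \<Rightarrow> real" where
  "Delta L = Sup ((\<lambda>v. ln (1 / supn v)) ` (L - {0}))"

definition Delta_tilde :: "real^'m \<Rightarrow> real^'n \<Rightarrow> real \<Rightarrow> ((real^'m) \<times> (real^'n)) set set" where
  "Delta_tilde \<alpha> \<beta> \<rho> = (\<Union>s\<in>{0..<1}. (\<lambda>L. gflow \<alpha> \<beta> (-s) ` L) ` {L. Delta L \<in> {0..\<rho>}})"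

definition stime :: "nat \<Rightarrow> nat \<Rightarrow> (real \<Rightarrow> real) \<Rightarrow> real \<Rightarrow> real" where
  "stime m n \<psi> t = real m / real (m + n) * ln t - real n / real (m + n) * ln (\<psi> t)"

definition tfun :: "nat \<Rightarrow> nat \<Rightarrow> (real \<Rightarrow> real) \<Rightarrow> real \<Rightarrow> real \<Rightarrow> real" where
  "tfun m n \<psi> t0 s = (THE t. t0 \<le> t \<and> s = stime m n \<psi> t)"

definition rfun :: "nat \<Rightarrow> nat \<Rightarrow> (real \<Rightarrow> real) \<Rightarrow> real \<Rightarrow> real \<Rightarrow> real" where
  "rfun m n \<psi> t0 s = - (1 / real (m + n)) * ln (tfun m n \<psi> t0 s * \<psi> (tfun m n \<psi> t0 s))"

definition omega1 :: "real^'m \<Rightarrow> real^'n \<Rightarrow> real" where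
  "omega1 \<alpha> \<beta> = Max (range (\<lambda>i. real CARD('m) * \<alpha> $ i) \<union> range (\<lambda>j. real CARD('n) * \<beta> $ j))"

definition omega2 :: "real^'m \<Rightarrow> real^'n \<Rightarrow> real" where
  "omega2 \<alpha> \<beta> = Min (range (\<lambda>i. real CARD('m) * \<alpha> $ i) \<union> range (\<lambda>j. real CARD('n) * \<beta> $ j))"

definition DI :: "real^'m \<Rightarrow> real^'n \<Rightarrow> (real \<Rightarrow> real) \<Rightarrow> (real^'n^'m) set" where
  "DI \<alpha> \<beta> \<psi> = {A. \<forall>\<^sub>F t in at_top. \<exists>p q. p \<in> intvecs \<and> q \<in> intvecs \<and> q \<noteq> 0 \<and>
      (\<forall>i. \<bar>(A *v q - p) $ i\<bar> powr (1 / \<alpha> $ i) < \<psi> t) \<and>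
      (\<forall>j. \<bar>q $ j\<bar> powr (1 / \<beta> $ j) < t)}"

end

theory Submission
  imports Defs "HOL-Library.FuncSet"
begin


lemma exists_N:
  fixes \<epsilon> :: "'m::finite \<Rightarrow> real" and P :: real
  assumes "\<forall>i. 0 < \<epsilon> i" "P * (\<Prod>i\<in>UNIV. \<epsilon> i) > 1"
  shows "\<exists>N::nat. N \<ge> 1 \<and> (\<forall>i. \<epsilon> i - 1 / real N > 0) \<and> P * (\<Prod>i\<in>UNIV. \<epsilon> i - 1 / real N) > 1"
proof -
  have lim: "(\<lambda>N::nat. P * (\<Prod>i\<in>UNIV. \<epsilon> i - 1 / real N)) \<longlonglongrightarrow> P * (\<Prod>i\<in>UNIV. \<epsilon> i - 0)"
    by (intro tendsto_intros lim_const_over_n)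
  have e1: "\<forall>\<^sub>F N in sequentially. P * (\<Prod>i\<in>UNIV. \<epsilon> i - 1 / real N) > 1"
    using order_tendstoD(1)[OF lim] assms by simp
  have e2: "\<forall>\<^sub>F N in sequentially. \<forall>i. \<epsilon> i - 1 / real N > 0"
  proof (rule eventually_all_finite)
    fix i
    have "(\<lambda>N::nat. \<epsilon> i - 1 / real N) \<longlonglongrightarrow> \<epsilon> i"
      using tendsto_diff[OF tendsto_const lim_const_over_n, of "\<epsilon> i" 1] by simp
    then show "\<forall>\<^sub>F N in sequentially. \<epsilon> i - 1 / real N > 0"
      by (rule order_tendstoD(1)) (use assms in auto)
  qed
  have e3: "\<forall>\<^sub>F N in sequentially. N \<ge> (1::nat)" by (rule eventually_ge_at_top)
  from eventually_conj[OF e3 eventually_conj[OF e2 e1]] obtain N0 where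
    "\<forall>N\<ge>N0. N \<ge> 1 \<and> (\<forall>i. \<epsilon> i - 1 / real N > 0) \<and> P * (\<Prod>i\<in>UNIV. \<epsilon> i - 1 / real N) > 1"
    unfolding eventually_sequentially by blast
  then show ?thesis by blast
qed

lemma PiE_UNIV_mem: "f \<in> Pi\<^sub>E UNIV S \<longleftrightarrow> (\<forall>i. f i \<in> S i)"
  by (simp add: PiE_iff)

lemma dirichlet:
  fixes A :: "real^'n^'m" and \<epsilon> :: "'m \<Rightarrow> real" and Q :: "'n \<Rightarrow> real"
  assumes eps: "\<forall>i. 0 < \<epsilon> i \<and> \<epsilon> i \<le> 1" and Q: "\<forall>j. Q j \<ge> 0"
    and prod: "(\<Prod>i\<in>UNIV. \<epsilon> i) * (\<Prod>j\<in>UNIV. Q j) \<ge> 1"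
  shows "\<exists>q p. q \<in> intvecs \<and> p \<in> intvecs \<and> q \<noteq> 0 \<and> (\<forall>j. \<bar>q$j\<bar> \<le> Q j) \<and>
     (\<forall>i. \<bar>(A *v q - p)$i\<bar> < \<epsilon> i)"
proof -
  define M where "M j = nat \<lfloor>Q j\<rfloor>" for j
  define P where "P = (\<Prod>j\<in>UNIV. M j + 1)"
  have QM: "Q j < real (M j + 1)" for j using Q by (simp add: M_def) linarith
  have MQ: "real (M j) \<le> Q j" for j using Q by (simp add: M_def)
  have "(\<Prod>j\<in>UNIV. Q j) < (\<Prod>j\<in>UNIV. real (M j + 1))"
    by (rule prod_mono_strict[of "undefined"]) (use QM Q less_imp_le in auto)
  also have "\<dots> = real P" by (simp add: P_def)
  finally have QP: "(\<Prod>j\<in>UNIV. Q j) < real P" .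
  have epos: "(\<Prod>i\<in>UNIV. \<epsilon> i) > 0" using eps by (simp add: prod_pos)
  have "1 < real P * (\<Prod>i\<in>UNIV. \<epsilon> i)"
    using mult_strict_left_mono[OF QP epos] prod by (simp add: mult.commute)
  then obtain N :: nat where N1: "N \<ge> 1" and Npos: "\<forall>i. \<epsilon> i - 1 / real N > 0"
    and NP: "real P * (\<Prod>i\<in>UNIV. \<epsilon> i - 1 / real N) > 1"
    using exists_N[of \<epsilon> "real P"] eps by blast
  define K where "K i = nat \<lfloor>real N * \<epsilon> i\<rfloor>" for i
  have KN: "K i \<le> N" for i
  proof -
    have "real N * \<epsilon> i \<le> real N" using eps by (simp add: mult_left_le)
    then show ?thesis unfolding K_def by (metis floor_mono floor_of_nat nat_int nat_mono)
  qed
  have KNe: "real (K i) \<le> real N * \<epsilon> i" for i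
  proof -
    have "0 \<le> real N * \<epsilon> i" using eps by (simp add: less_imp_le)
    then show ?thesis unfolding K_def by (simp add: of_nat_nat)
  qed
  have Klow: "real N * (\<epsilon> i - 1 / real N) \<le> real (K i)" for i
  proof -
    have "real N * (\<epsilon> i - 1 / real N) = real N * \<epsilon> i - 1" using N1 by (simp add: field_simps)
    then show ?thesis unfolding K_def using eps by simp linarith
  qed
  have "real N ^ CARD('m) * (\<Prod>i\<in>UNIV. \<epsilon> i - 1 / real N) = (\<Prod>i\<in>UNIV. real N * (\<epsilon> i - 1 / real N))"
    by (simp add: prod.distrib)
  also have "\<dots> \<le> (\<Prod>i\<in>UNIV. real (K i))"
  proof (rule prod_mono)
    fix i
    have "0 \<le> \<epsilon> i - 1 / real N" using Npos by (simp add: less_imp_le)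
    then show "0 \<le> real N * (\<epsilon> i - 1 / real N) \<and> real N * (\<epsilon> i - 1 / real N) \<le> real (K i)"
      using Klow by simp
  qed
  finally have "real N ^ CARD('m) * (\<Prod>i\<in>UNIV. \<epsilon> i - 1 / real N) \<le> (\<Prod>i\<in>UNIV. real (K i))" .
  then have X: "real P * (real N ^ CARD('m) * (\<Prod>i\<in>UNIV. \<epsilon> i - 1 / real N)) \<le> real P * (\<Prod>i\<in>UNIV. real (K i))"
    by (rule mult_left_mono) simp
  have Y: "real N ^ CARD('m) * 1 < real N ^ CARD('m) * (real P * (\<Prod>i\<in>UNIV. \<epsilon> i - 1 / real N))"
    by (rule mult_strict_left_mono[OF NP]) (use N1 in simp)
  have "real P * (real N ^ CARD('m) * (\<Prod>i\<in>UNIV. \<epsilon> i - 1 / real N)) =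
     real N ^ CARD('m) * (real P * (\<Prod>i\<in>UNIV. \<epsilon> i - 1 / real N))" by simp
  then have "real N ^ CARD('m) < real P * (\<Prod>i\<in>UNIV. real (K i))"
    using X Y by linarith
  then have count: "N ^ CARD('m) < P * (\<Prod>i\<in>UNIV. K i)"
    by (metis of_nat_less_iff of_nat_mult of_nat_power of_nat_prod)
  define F where "F = Pi\<^sub>E (UNIV::'n set) (\<lambda>j. {..M j})"
  define qv where "qv f = (\<chi> j. real (f j))" for f :: "'n \<Rightarrow> nat"
  define a where "a f i = frac ((A *v qv f) $ i)" for f i
  define c where "c f i = nat \<lfloor>real N * a f i\<rfloor>" for f i
  have a01: "0 \<le> a f i" "a f i < 1" for f i unfolding a_def by (auto simp: frac_lt_1)
  have cbounds: "real (c f i) \<le> real N * a f i" "real N * a f i < real (c f i) + 1" for f i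
    using a01[of f i] unfolding c_def by auto
  have cN: "c f i < N" for f i
  proof -
    have "real N * a f i < real N" using a01[of f i] N1 by simp
    then have "real (c f i) < real N" using cbounds[of f i] by linarith
    then show ?thesis by simp
  qed
  define D where "D = Pi\<^sub>E (UNIV::'m set) (\<lambda>i. {..<K i})"
  define C where "C f = (\<lambda>d. \<lambda>i. (c f i + d i) mod N) ` D" for f
  define G where "G = Pi\<^sub>E (UNIV::'m set) (\<lambda>i. {..<N})"
  have cardC: "card (C f) = (\<Prod>i\<in>UNIV. K i)" for f
  proof -
    have "inj_on (\<lambda>d. \<lambda>i. (c f i + d i) mod N) D"
    proof (rule inj_onI)
      fix d d' assume d: "d \<in> D" "d' \<in> D" and eq: "(\<lambda>i. (c f i + d i) mod N) = (\<lambda>i. (c f i + d' i) mod N)"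
      show "d = d'"
      proof
        fix i
        have "(c f i + d i) mod N = (c f i + d' i) mod N" using fun_cong[OF eq, of i] by simp
        then have "d i mod N = d' i mod N" by (simp add: nat_mod_eq_iff)
        moreover have "d i < N" "d' i < N" using d KN unfolding D_def PiE_UNIV_mem
          by (meson lessThan_iff order_less_le_trans)+
        ultimately show "d i = d' i" by simp
      qed
    qed
    then have "card (C f) = card D" unfolding C_def by (rule card_image)
    also have "\<dots> = (\<Prod>i\<in>UNIV. K i)" unfolding D_def by (simp add: card_PiE)
    finally show ?thesis .
  qed
  have CG: "C f \<subseteq> G" for f
    using N1 unfolding C_def G_def PiE_UNIV_mem by auto
  have finG: "finite G" unfolding G_def by (simp add: finite_PiE)
  have cardG: "card G = N ^ CARD('m)" unfolding G_def by (simp add: card_PiE)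
  have finF: "finite F" unfolding F_def by (simp add: finite_PiE)
  have cardF: "card F = P" unfolding F_def P_def by (simp add: card_PiE)
  have "\<exists>f\<in>F. \<exists>f'\<in>F. f \<noteq> f' \<and> C f \<inter> C f' \<noteq> {}"
  proof (rule ccontr)
    assume "\<not> ?thesis"
    then have disj: "\<forall>f\<in>F. \<forall>f'\<in>F. f \<noteq> f' \<longrightarrow> C f \<inter> C f' = {}" by blast
    have "card (\<Union>(C ` F)) = (\<Sum>f\<in>F. card (C f))"
      by (rule card_UN_disjoint[OF finF _ disj]) (use CG finG finite_subset in blast)
    also have "\<dots> = P * (\<Prod>i\<in>UNIV. K i)" using cardC cardF by simp
    finally have "P * (\<Prod>i\<in>UNIV. K i) \<le> card G"
      by (metis CG UN_least card_mono finG)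
    then show False using count cardG by simp
  qed
  then obtain f f' u where fF: "f \<in> F" "f' \<in> F" "f \<noteq> f'" and u: "u \<in> C f" "u \<in> C f'" by blast
  obtain d where d: "d \<in> D" "u = (\<lambda>i. (c f i + d i) mod N)" using u(1) unfolding C_def by blast
  obtain d' where d': "d' \<in> D" "u = (\<lambda>i. (c f' i + d' i) mod N)" using u(2) unfolding C_def by blast
  define z where "z i = int (c f i + d i) div int N - int (c f' i + d' i) div int N" for i
  have zeq: "real (c f i) + real (d i) - real (c f' i) - real (d' i) = real N * real_of_int (z i)" for i
  proof -
    have m: "int (c f i + d i) mod int N = int (c f' i + d' i) mod int N"
      using fun_cong[OF trans[OF d(2)[symmetric] d'(2)], of i] by (metis of_nat_mod)
    have "int (c f i + d i) - int (c f' i + d' i) = int N * z i"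
      unfolding z_def using m
      by (smt (verit) minus_mod_eq_mult_div right_diff_distrib')
    then have "real_of_int (int (c f i + d i) - int (c f' i + d' i)) = real_of_int (int N * z i)" by simp
    then show ?thesis by simp
  qed
  have dK: "real (d i) + 1 \<le> real (K i)" "real (d' i) + 1 \<le> real (K i)" for i
  proof -
    have "d i < K i" "d' i < K i" using d(1) d'(1) unfolding D_def PiE_UNIV_mem by auto
    then show "real (d i) + 1 \<le> real (K i)" "real (d' i) + 1 \<le> real (K i)" by linarith+
  qed
  define q where "q = qv f - qv f'"
  define p where "p = (\<chi> i. real_of_int (\<lfloor>(A *v qv f)$i\<rfloor> - \<lfloor>(A *v qv f')$i\<rfloor> + z i))"
  have key: "\<bar>(A *v q - p)$i\<bar> < \<epsilon> i" for i
  proof -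
    have e: "(A *v q - p)$i = a f i - a f' i - real_of_int (z i)"
      unfolding q_def p_def a_def by (simp add: matrix_vector_mult_diff_distrib frac_def)
    have "\<bar>real N * a f i - real N * a f' i - real N * real_of_int (z i)\<bar> < real (K i)"
      using cbounds[of f i] cbounds[of f' i] zeq[of i] dK[of i] by linarith
    then have "real N * \<bar>a f i - a f' i - real_of_int (z i)\<bar> < real N * \<epsilon> i"
      using KNe[of i] by (simp add: abs_mult right_diff_distrib[symmetric])
    then have "\<bar>a f i - a f' i - real_of_int (z i)\<bar> < \<epsilon> i" using N1 by simp
    then show ?thesis using e by simp
  qed
  have qnz: "q \<noteq> 0"
  proof
    assume "q = 0"
    then have "q $ j = 0" for j by simp
    then have "f j = f' j" for j unfolding q_def qv_def by simp
    then show False using fF(3) by blast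
  qed
  have qb: "\<bar>q$j\<bar> \<le> Q j" for j
  proof -
    have "f j \<le> M j" "f' j \<le> M j" using fF unfolding F_def PiE_UNIV_mem by auto
    then have "\<bar>real (f j) - real (f' j)\<bar> \<le> real (M j)" by linarith
    then show ?thesis using MQ[of j] unfolding q_def qv_def by simp
  qed
  have "q \<in> intvecs" unfolding intvecs_def q_def qv_def by simp
  moreover have "p \<in> intvecs" unfolding intvecs_def p_def by simp
  ultimately show ?thesis using key qnz qb by blast
qed



lemma powr_lt_iff:
  fixes a e b :: real
  assumes "a \<ge> 0" "e > 0" "b > 0"
  shows "a powr (1/e) < b \<longleftrightarrow> a < b powr e"
proof (cases "a = 0")
  case True thus ?thesis using assms by simp
next
  case False
  then have a: "a > 0" using assms by simp
  have eq: "(a powr (1/e)) powr e = a" using assms a by (simp add: powr_powr)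
  show ?thesis
  proof
    assume "a powr (1/e) < b"
    from powr_less_mono2[OF \<open>e>0\<close> _ this] have "(a powr (1/e)) powr e < b powr e" by simp
    thus "a < b powr e" using eq by simp
  next
    assume h: "a < b powr e"
    show "a powr (1/e) < b"
    proof (rule ccontr)
      assume "\<not> a powr (1/e) < b"
      then have "b \<le> a powr (1/e)" by simp
      from powr_mono2[OF _ _ this] assms have "b powr e \<le> (a powr (1/e)) powr e" by simp
      then show False using eq h by simp
    qed
  qed
qed

lemma supn_le_iff: "supn v \<le> c \<longleftrightarrow> (\<forall>i. \<bar>fst v $ i\<bar> \<le> c) \<and> (\<forall>j. \<bar>snd v $ j\<bar> \<le> c)"
  unfolding supn_def by (simp add: Max_le_iff)

lemma supn_less_iff: "supn v < c \<longleftrightarrow> (\<forall>i. \<bar>fst v $ i\<bar> < c) \<and> (\<forall>j. \<bar>snd v $ j\<bar> < c)"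
  unfolding supn_def by (simp add: Max_less_iff)

lemma supn_ge_fst: "\<bar>fst v $ i\<bar> \<le> supn v"
  using supn_le_iff[of v "supn v"] by simp

lemma supn_ge_snd: "\<bar>snd v $ j\<bar> \<le> supn v"
  using supn_le_iff[of v "supn v"] by simp

lemma gflow_fst[simp]: "fst (gflow \<alpha> \<beta> s v) $ i = exp (\<alpha> $ i * s) * fst v $ i"
  by (simp add: gflow_def)

lemma gflow_snd[simp]: "snd (gflow \<alpha> \<beta> s v) $ j = exp (- (\<beta> $ j * s)) * snd v $ j"
  by (simp add: gflow_def)

lemma gflow_add: "gflow \<alpha> \<beta> s (gflow \<alpha> \<beta> s' v) = gflow \<alpha> \<beta> (s + s') v"
  by (simp add: gflow_def vec_eq_iff exp_add[symmetric] algebra_simps)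

lemma gflow_image_add: "gflow \<alpha> \<beta> s ` (gflow \<alpha> \<beta> s' ` L) = gflow \<alpha> \<beta> (s + s') ` L"
  by (simp add: image_image gflow_add)

lemma gflow_zero_iff: "gflow \<alpha> \<beta> s v = 0 \<longleftrightarrow> v = 0"
proof
  assume h: "gflow \<alpha> \<beta> s v = 0"
  have "fst v $ i = 0" for i using arg_cong[OF h, of "\<lambda>w. fst w $ i"] by simp
  moreover have "snd v $ j = 0" for j using arg_cong[OF h, of "\<lambda>w. snd w $ j"] by simp
  ultimately show "v = 0" by (simp add: prod_eq_iff vec_eq_iff)
qed (simp add: gflow_def vec_eq_iff zero_prod_def)

lemma supn_pos: "v \<noteq> 0 \<Longrightarrow> supn v > 0"
proof (rule ccontr)
  assume "v \<noteq> 0" "\<not> supn v > 0"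
  then have "supn v \<le> 0" by simp
  then have "fst v $ i = 0" "snd v $ j = 0" for i j using supn_le_iff[of v 0] by auto
  then have "v = 0" by (simp add: prod_eq_iff vec_eq_iff)
  then show False using \<open>v \<noteq> 0\<close> by simp
qed

lemma intvecs_neg: "x \<in> intvecs \<Longrightarrow> - x \<in> intvecs"
  unfolding intvecs_def by simp

lemma LambdaA_mem: "x \<in> intvecs \<Longrightarrow> y \<in> intvecs \<Longrightarrow> (x + A *v y, y) \<in> LambdaA A"
  unfolding LambdaA_def by blast

lemma supn_lower:
  fixes \<alpha> :: "real^'m" and \<beta> :: "real^'n"
  assumes a: "\<forall>i. 0 < \<alpha> $ i \<and> \<alpha> $ i \<le> 1" and b: "\<forall>j. 0 < \<beta> $ j \<and> \<beta> $ j \<le> 1"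
    and v: "v \<in> gflow \<alpha> \<beta> s ` LambdaA A - {0}"
  shows "supn v \<ge> exp (- \<bar>s\<bar>)"
proof -
  obtain x y where xy: "x \<in> intvecs" "y \<in> intvecs" "v = gflow \<alpha> \<beta> s (x + A *v y, y)"
    using v unfolding LambdaA_def by blast
  show ?thesis
  proof (cases "y = 0")
    case False
    then obtain j where j: "y $ j \<noteq> 0" by (metis vec_eq_iff zero_index)
    have "y $ j \<in> \<int>" using xy(2) unfolding intvecs_def by simp
    then have y1: "1 \<le> \<bar>y $ j\<bar>" using j Ints_nonzero_abs_ge1 by blast
    have bj: "0 \<le> \<beta> $ j" "\<beta> $ j \<le> 1" using b less_imp_le by auto
    have "\<beta> $ j * \<bar>s\<bar> \<le> \<bar>s\<bar>" by (rule mult_left_le_one_le[OF abs_ge_zero bj])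
    then have "\<bar>\<beta> $ j * s\<bar> \<le> \<bar>s\<bar>" using bj by (simp add: abs_mult abs_of_nonneg)
    then have "- \<bar>s\<bar> \<le> - (\<beta> $ j * s)" by (simp add: abs_le_iff)
    then have "exp (- \<bar>s\<bar>) \<le> exp (- (\<beta> $ j * s))" by simp
    also have "\<dots> \<le> exp (- (\<beta> $ j * s)) * \<bar>y $ j\<bar>" using y1 by simp
    also have "\<dots> = \<bar>snd v $ j\<bar>" using xy by (simp add: abs_mult)
    also have "\<dots> \<le> supn v" by (rule supn_ge_snd)
    finally show ?thesis .
  next
    case True
    have "x \<noteq> 0"
    proof
      assume "x = 0"
      then have "v = gflow \<alpha> \<beta> s 0" using xy True by (simp add: zero_prod_def)
      then have "v = 0" using gflow_zero_iff by blast
      then show False using v by simp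
    qed
    then obtain i where i: "x $ i \<noteq> 0" by (metis vec_eq_iff zero_index)
    have "x $ i \<in> \<int>" using xy(1) unfolding intvecs_def by simp
    then have x1: "1 \<le> \<bar>x $ i\<bar>" using i Ints_nonzero_abs_ge1 by blast
    have ai: "0 \<le> \<alpha> $ i" "\<alpha> $ i \<le> 1" using a less_imp_le by auto
    have "\<alpha> $ i * \<bar>s\<bar> \<le> \<bar>s\<bar>" by (rule mult_left_le_one_le[OF abs_ge_zero ai])
    then have "\<bar>\<alpha> $ i * s\<bar> \<le> \<bar>s\<bar>" using ai by (simp add: abs_mult abs_of_nonneg)
    then have "- \<bar>s\<bar> \<le> \<alpha> $ i * s" by (simp add: abs_le_iff)
    then have "exp (- \<bar>s\<bar>) \<le> exp (\<alpha> $ i * s)" by simp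
    also have "\<dots> \<le> exp (\<alpha> $ i * s) * \<bar>x $ i\<bar>" using x1 by simp
    also have "\<dots> = \<bar>fst v $ i\<bar>" using xy True by (simp add: abs_mult)
    also have "\<dots> \<le> supn v" by (rule supn_ge_fst)
    finally show ?thesis .
  qed
qed



lemma ln_one_div: "x > 0 \<Longrightarrow> ln (1 / x) = - ln (x::real)"
  by (simp add: ln_div)

lemma L_nonempty:
  fixes \<alpha> :: "real^'m" and \<beta> :: "real^'n"
  shows "gflow \<alpha> \<beta> s (((\<chi> i. 1) :: real^'m), 0) \<in> gflow \<alpha> \<beta> s ` LambdaA A - {0}"
proof -
  have "((\<chi> i. 1) :: real^'m) \<in> intvecs" "(0::real^'n) \<in> intvecs" unfolding intvecs_def by auto
  from LambdaA_mem[OF this, of A] have "(((\<chi> i. 1) :: real^'m), 0::real^'n) \<in> LambdaA A" by simp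
  moreover have "(((\<chi> i. 1) :: real^'m), 0::real^'n) \<noteq> 0" by (simp add: zero_prod_def vec_eq_iff)
  ultimately show ?thesis using gflow_zero_iff by blast
qed

lemma Delta_bdd:
  fixes \<alpha> :: "real^'m" and \<beta> :: "real^'n"
  assumes a: "\<forall>i. 0 < \<alpha> $ i \<and> \<alpha> $ i \<le> 1" and b: "\<forall>j. 0 < \<beta> $ j \<and> \<beta> $ j \<le> 1"
  shows "bdd_above ((\<lambda>v. ln (1 / supn v)) ` (gflow \<alpha> \<beta> s ` LambdaA A - {0}))"
proof (rule bdd_aboveI2)
  fix v assume v: "v \<in> gflow \<alpha> \<beta> s ` LambdaA A - {0}"
  have "exp (- \<bar>s\<bar>) \<le> supn v" by (rule supn_lower[OF a b v])
  then have "- \<bar>s\<bar> \<le> ln (supn v)" by (metis exp_gt_zero ln_exp ln_le_cancel_iff order_less_le_trans)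
  moreover have "supn v > 0" using v supn_pos by blast
  ultimately show "ln (1 / supn v) \<le> \<bar>s\<bar>" using ln_one_div[of "supn v"] by linarith
qed

lemma Delta_upper:
  fixes \<alpha> :: "real^'m" and \<beta> :: "real^'n"
  assumes a: "\<forall>i. 0 < \<alpha> $ i \<and> \<alpha> $ i \<le> 1" and b: "\<forall>j. 0 < \<beta> $ j \<and> \<beta> $ j \<le> 1"
    and v: "v \<in> gflow \<alpha> \<beta> s ` LambdaA A - {0}"
  shows "ln (1 / supn v) \<le> Delta (gflow \<alpha> \<beta> s ` LambdaA A)"
  unfolding Delta_def by (rule cSup_upper[OF _ Delta_bdd[OF a b]]) (use v in blast)

lemma Delta_least:
  fixes \<alpha> :: "real^'m" and \<beta> :: "real^'n"
  assumes "\<And>v. v \<in> gflow \<alpha> \<beta> s ` LambdaA A - {0} \<Longrightarrow> ln (1 / supn v) \<le> c"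
  shows "Delta (gflow \<alpha> \<beta> s ` LambdaA A) \<le> c"
proof -
  have "gflow \<alpha> \<beta> s (((\<chi> i. 1) :: real^'m), 0) \<in> gflow \<alpha> \<beta> s ` LambdaA A - {0}" by (rule L_nonempty)
  then show ?thesis unfolding Delta_def by (intro cSup_least) (use assms in auto)
qed

lemma Delta_nonneg:
  fixes \<alpha> :: "real^'m" and \<beta> :: "real^'n" and A :: "real^'n^'m"
  assumes a: "\<forall>i. 0 < \<alpha> $ i \<and> \<alpha> $ i \<le> 1" and b: "\<forall>j. 0 < \<beta> $ j \<and> \<beta> $ j \<le> 1"
    and asum: "(\<Sum>i\<in>UNIV. \<alpha> $ i) = 1" and bsum: "(\<Sum>j\<in>UNIV. \<beta> $ j) = 1"
    and s: "s \<ge> 0"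
  shows "0 \<le> Delta (gflow \<alpha> \<beta> s ` LambdaA A)"
proof -
  have "0 \<le> \<alpha> $ i * s" for i using a[rule_format, of i] s by simp
  then have e1: "\<forall>i. 0 < exp (- (\<alpha> $ i * s)) \<and> exp (- (\<alpha> $ i * s)) \<le> 1"
    by simp
  have e2: "\<forall>j. exp (\<beta> $ j * s) \<ge> 0" by simp
  have "(\<Prod>i\<in>UNIV. exp (- (\<alpha> $ i * s))) = exp (\<Sum>i\<in>UNIV. - (\<alpha> $ i * s))" by (simp add: exp_sum)
  also have "\<dots> = exp (- s)" using asum by (simp add: sum_negf sum_distrib_right[symmetric])
  finally have p1: "(\<Prod>i\<in>UNIV. exp (- (\<alpha> $ i * s))) = exp (- s)" .
  have "(\<Prod>j\<in>UNIV. exp (\<beta> $ j * s)) = exp (\<Sum>j\<in>UNIV. \<beta> $ j * s)" by (simp add: exp_sum)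
  also have "\<dots> = exp s" using bsum by (simp add: sum_distrib_right[symmetric])
  finally have p2: "(\<Prod>j\<in>UNIV. exp (\<beta> $ j * s)) = exp s" .
  have "(\<Prod>i\<in>UNIV. exp (- (\<alpha> $ i * s))) * (\<Prod>j\<in>UNIV. exp (\<beta> $ j * s)) \<ge> 1"
    unfolding p1 p2 by (simp add: exp_add[symmetric])
  from dirichlet[OF e1 e2 this, of A] obtain q p where qp: "q \<in> intvecs" "p \<in> intvecs" "q \<noteq> 0"
    "\<forall>j. \<bar>q$j\<bar> \<le> exp (\<beta> $ j * s)" "\<forall>i. \<bar>(A *v q - p)$i\<bar> < exp (- (\<alpha> $ i * s))" by blast
  define v where "v = gflow \<alpha> \<beta> s (- p + A *v q, q)"
  have "(- p + A *v q, q) \<in> LambdaA A" by (rule LambdaA_mem[OF intvecs_neg[OF qp(2)] qp(1)])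
  moreover have "(- p + A *v q, q) \<noteq> 0" using qp(3) by (simp add: zero_prod_def)
  ultimately have vL: "v \<in> gflow \<alpha> \<beta> s ` LambdaA A - {0}" unfolding v_def using gflow_zero_iff by blast
  have "supn v \<le> 1" unfolding supn_le_iff
  proof safe
    fix i
    have "\<bar>fst v $ i\<bar> = exp (\<alpha> $ i * s) * \<bar>(A *v q - p)$i\<bar>" unfolding v_def by (simp add: abs_mult)
    also have "\<dots> \<le> exp (\<alpha> $ i * s) * exp (- (\<alpha> $ i * s))"
      using qp(5) by (intro mult_left_mono) (auto simp: less_imp_le)
    also have "\<dots> = 1" by (simp add: exp_minus)
    finally show "\<bar>fst v $ i\<bar> \<le> 1" .
  next
    fix j
    have "\<bar>snd v $ j\<bar> = exp (- (\<beta> $ j * s)) * \<bar>q$j\<bar>" unfolding v_def by (simp add: abs_mult)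
    also have "\<dots> \<le> exp (- (\<beta> $ j * s)) * exp (\<beta> $ j * s)"
      using qp(4) by (intro mult_left_mono) auto
    also have "\<dots> = 1" by (simp add: exp_minus)
    finally show "\<bar>snd v $ j\<bar> \<le> 1" .
  qed
  moreover have "supn v > 0" using vL supn_pos by blast
  ultimately have "0 \<le> ln (1 / supn v)" by simp
  also have "\<dots> \<le> Delta (gflow \<alpha> \<beta> s ` LambdaA A)" by (rule Delta_upper[OF a b vL])
  finally show ?thesis .
qed



definition rr :: "nat \<Rightarrow> nat \<Rightarrow> (real \<Rightarrow> real) \<Rightarrow> real \<Rightarrow> real" where
  "rr m n \<psi> t = - (1 / real (m + n)) * ln (t * \<psi> t)"

lemma aux1: fixes m d a b :: real assumes "d \<noteq> 0"
  shows "m/d*a - (d-m)/d*b + b = -(m*(-(1/d)*(a+b)))"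
  using assms by (simp add: field_simps)

lemma aux2: fixes m d a b :: real assumes "d \<noteq> 0"
  shows "a - (m/d*a - (d-m)/d*b) = -((d-m)*(-(1/d)*(a+b)))"
  using assms by (simp add: field_simps)

lemma time_id:
  assumes "m + n > 0" "t > 0" "\<psi> t > 0"
  shows "stime m n \<psi> t + ln (\<psi> t) = - (real m * rr m n \<psi> t)"
    and "ln t - stime m n \<psi> t = - (real n * rr m n \<psi> t)"
proof -
  have "real (m + n) > 0" using assms(1) of_nat_0_less_iff by blast
  then have d: "real (m + n) \<noteq> 0" by linarith
  have nn: "real n = real (m + n) - real m" by simp
  have l: "ln (t * \<psi> t) = ln t + ln (\<psi> t)" using assms by (simp add: ln_mult)
  have nn': "real (m + n) - real m = real n" by simp
  have e1: "real m / real (m + n) * ln t - real n / real (m + n) * ln (\<psi> t) + ln (\<psi> t) =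
     - (real m * (- (1 / real (m + n)) * (ln t + ln (\<psi> t))))"
    using aux1[OF d, of "real m" "ln t" "ln (\<psi> t)"] by (simp only: nn')
  have e2: "ln t - (real m / real (m + n) * ln t - real n / real (m + n) * ln (\<psi> t)) =
     - (real n * (- (1 / real (m + n)) * (ln t + ln (\<psi> t))))"
    using aux2[OF d, where m="real m" and a="ln t" and b="ln (\<psi> t)"] by (simp only: nn')
  show "stime m n \<psi> t + ln (\<psi> t) = - (real m * rr m n \<psi> t)"
    unfolding stime_def rr_def l by (rule e1)
  show "ln t - stime m n \<psi> t = - (real n * rr m n \<psi> t)"
    unfolding stime_def rr_def l by (rule e2)
qed

lemma rr_nonneg:
  assumes "t > 0" "\<psi> t > 0" "t * \<psi> t \<le> 1"
  shows "rr m n \<psi> t \<ge> 0"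
proof -
  have "ln (t * \<psi> t) \<le> 0" using assms by simp
  then show ?thesis unfolding rr_def by (simp add: divide_nonpos_nonneg mult_nonneg_nonpos2)
qed

lemma fst_id:
  fixes \<alpha> :: "real^'m" and \<beta> :: "real^'n"
  assumes "t > 0" "\<psi> t > 0" and s: "s = stime CARD('m) CARD('n) \<psi> t"
  shows "exp (\<alpha> $ i * s) * \<psi> t powr (\<alpha> $ i) = exp (- (real CARD('m) * \<alpha> $ i * rr CARD('m) CARD('n) \<psi> t))"
proof -
  have "exp (\<alpha> $ i * s) * \<psi> t powr (\<alpha> $ i) = exp (\<alpha> $ i * (s + ln (\<psi> t)))"
    using assms by (simp add: powr_def exp_add[symmetric] algebra_simps)
  also have "s + ln (\<psi> t) = - (real CARD('m) * rr CARD('m) CARD('n) \<psi> t)"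
    using time_id(1)[of "CARD('m)" "CARD('n)" t \<psi>] assms by simp
  finally show ?thesis by (simp add: algebra_simps)
qed

lemma snd_id:
  fixes \<alpha> :: "real^'m" and \<beta> :: "real^'n"
  assumes "t > 0" "\<psi> t > 0" and s: "s = stime CARD('m) CARD('n) \<psi> t"
  shows "exp (- (\<beta> $ j * s)) * t powr (\<beta> $ j) = exp (- (real CARD('n) * \<beta> $ j * rr CARD('m) CARD('n) \<psi> t))"
proof -
  have "exp (- (\<beta> $ j * s)) * t powr (\<beta> $ j) = exp (\<beta> $ j * (ln t - s))"
    using assms by (simp add: powr_def exp_add[symmetric] algebra_simps)
  also have "ln t - s = - (real CARD('n) * rr CARD('m) CARD('n) \<psi> t)"
    using time_id(2)[of "CARD('m)" "CARD('n)" t \<psi>] assms by simp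
  finally show ?thesis by (simp add: algebra_simps)
qed

lemma good_Delta:
  fixes \<alpha> :: "real^'m" and \<beta> :: "real^'n" and A :: "real^'n^'m"
  assumes a: "\<forall>i. 0 < \<alpha> $ i \<and> \<alpha> $ i \<le> 1" and b: "\<forall>j. 0 < \<beta> $ j \<and> \<beta> $ j \<le> 1"
    and t: "t > 0" "\<psi> t > 0" "t * \<psi> t \<le> 1"
    and s: "s = stime CARD('m) CARD('n) \<psi> t"
    and w: "\<forall>i. w \<le> real CARD('m) * \<alpha> $ i" "\<forall>j. w \<le> real CARD('n) * \<beta> $ j"
    and pq: "p \<in> intvecs" "q \<in> intvecs" "q \<noteq> 0"
      "\<forall>i. \<bar>(A *v q - p)$i\<bar> powr (1 / \<alpha> $ i) < \<psi> t" "\<forall>j. \<bar>q$j\<bar> powr (1 / \<beta> $ j) < t"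
  shows "w * rr CARD('m) CARD('n) \<psi> t < Delta (gflow \<alpha> \<beta> s ` LambdaA A)"
proof -
  define R where "R = rr CARD('m) CARD('n) \<psi> t"
  have R0: "R \<ge> 0" unfolding R_def using rr_nonneg t by blast
  define v where "v = gflow \<alpha> \<beta> s (- p + A *v q, q)"
  have "(- p + A *v q, q) \<in> LambdaA A" by (rule LambdaA_mem[OF intvecs_neg[OF pq(1)] pq(2)])
  moreover have "(- p + A *v q, q) \<noteq> 0" using pq(3) by (simp add: zero_prod_def)
  ultimately have vL: "v \<in> gflow \<alpha> \<beta> s ` LambdaA A - {0}" unfolding v_def using gflow_zero_iff by blast
  have "supn v < exp (- (w * R))" unfolding supn_less_iff
  proof safe
    fix i
    have lt: "\<bar>(A *v q - p)$i\<bar> < \<psi> t powr (\<alpha> $ i)"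
      using powr_lt_iff[of "\<bar>(A *v q - p)$i\<bar>" "\<alpha> $ i" "\<psi> t"] pq(4) a t by auto
    have "\<bar>fst v $ i\<bar> = exp (\<alpha> $ i * s) * \<bar>(A *v q - p)$i\<bar>" unfolding v_def by (simp add: abs_mult)
    also have "\<dots> < exp (\<alpha> $ i * s) * \<psi> t powr (\<alpha> $ i)" using lt by simp
    also have "\<dots> = exp (- (real CARD('m) * \<alpha> $ i * R))" unfolding R_def by (rule fst_id[OF t(1,2) s])
    also have "\<dots> \<le> exp (- (w * R))" using mult_right_mono[OF w(1)[rule_format, of i] R0] by simp
    finally show "\<bar>fst v $ i\<bar> < exp (- (w * R))" .
  next
    fix j
    have lt: "\<bar>q$j\<bar> < t powr (\<beta> $ j)"
      using powr_lt_iff[of "\<bar>q$j\<bar>" "\<beta> $ j" t] pq(5) b t by auto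
    have "\<bar>snd v $ j\<bar> = exp (- (\<beta> $ j * s)) * \<bar>q$j\<bar>" unfolding v_def by (simp add: abs_mult)
    also have "\<dots> < exp (- (\<beta> $ j * s)) * t powr (\<beta> $ j)" using lt by simp
    also have "\<dots> = exp (- (real CARD('n) * \<beta> $ j * R))" unfolding R_def by (rule snd_id[OF t(1,2) s])
    also have "\<dots> \<le> exp (- (w * R))" using mult_right_mono[OF w(2)[rule_format, of j] R0] by simp
    finally show "\<bar>snd v $ j\<bar> < exp (- (w * R))" .
  qed
  moreover have sp: "supn v > 0" using vL supn_pos by blast
  ultimately have "ln (supn v) < - (w * R)" by (metis exp_gt_zero ln_exp ln_less_cancel_iff)
  then have "w * R < ln (1 / supn v)" using ln_one_div[OF sp] by linarith
  also have "\<dots> \<le> Delta (gflow \<alpha> \<beta> s ` LambdaA A)" by (rule Delta_upper[OF a b vL])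
  finally show ?thesis unfolding R_def .
qed

lemma notgood_Delta:
  fixes \<alpha> :: "real^'m" and \<beta> :: "real^'n" and A :: "real^'n^'m"
  assumes a: "\<forall>i. 0 < \<alpha> $ i \<and> \<alpha> $ i \<le> 1" and b: "\<forall>j. 0 < \<beta> $ j \<and> \<beta> $ j \<le> 1"
    and t: "t > 0" "\<psi> t > 0" "t * \<psi> t \<le> 1"
    and s: "s = stime CARD('m) CARD('n) \<psi> t" and s0: "s \<ge> 0"
    and w: "\<forall>i. real CARD('m) * \<alpha> $ i \<le> w" "\<forall>j. real CARD('n) * \<beta> $ j \<le> w" "w \<ge> 0"
    and ng: "\<not> (\<exists>p q. p \<in> intvecs \<and> q \<in> intvecs \<and> q \<noteq> 0 \<and>
      (\<forall>i. \<bar>(A *v q - p)$i\<bar> powr (1 / \<alpha> $ i) < \<psi> t) \<and> (\<forall>j. \<bar>q$j\<bar> powr (1 / \<beta> $ j) < t))"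
  shows "Delta (gflow \<alpha> \<beta> s ` LambdaA A) \<le> w * rr CARD('m) CARD('n) \<psi> t"
proof (rule Delta_least)
  define R where "R = rr CARD('m) CARD('n) \<psi> t"
  have R0: "R \<ge> 0" unfolding R_def using rr_nonneg t by blast
  fix v assume vL: "v \<in> gflow \<alpha> \<beta> s ` LambdaA A - {0}"
  obtain x y where xy: "x \<in> intvecs" "y \<in> intvecs" "v = gflow \<alpha> \<beta> s (x + A *v y, y)"
    using vL unfolding LambdaA_def by blast
  have "exp (- (w * R)) \<le> supn v"
  proof (cases "y = 0")
    case True
    have "x \<noteq> 0"
    proof
      assume "x = 0"
      then have "v = gflow \<alpha> \<beta> s 0" using xy True by (simp add: zero_prod_def)
      then have "v = 0" using gflow_zero_iff by blast
      then show False using vL by simp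
    qed
    then obtain i where i: "x $ i \<noteq> 0" by (metis vec_eq_iff zero_index)
    have "x $ i \<in> \<int>" using xy(1) unfolding intvecs_def by simp
    then have x1: "1 \<le> \<bar>x $ i\<bar>" using i Ints_nonzero_abs_ge1 by blast
    have "0 \<le> \<alpha> $ i * s" using a[rule_format, of i] s0 by simp
    then have "1 \<le> exp (\<alpha> $ i * s)" by simp
    have "exp (- (w * R)) \<le> 1" using w(3) R0 by simp
    also have "\<dots> \<le> exp (\<alpha> $ i * s) * \<bar>x $ i\<bar>" using x1 \<open>1 \<le> exp (\<alpha> $ i * s)\<close>
      by (metis mult_mono' mult.right_neutral zero_le_one)
    also have "\<dots> = \<bar>fst v $ i\<bar>" using xy True by (simp add: abs_mult)
    also have "\<dots> \<le> supn v" by (rule supn_ge_fst)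
    finally show ?thesis .
  next
    case False
    have xi: "- x \<in> intvecs" using intvecs_neg[OF xy(1)] .
    have eq: "A *v y - - x = x + A *v y" by simp
    from ng xi xy(2) False have
      "(\<exists>i. \<not> \<bar>(x + A *v y)$i\<bar> powr (1 / \<alpha> $ i) < \<psi> t) \<or> (\<exists>j. \<not> \<bar>y$j\<bar> powr (1 / \<beta> $ j) < t)"
      using eq by metis
    then show ?thesis
    proof
      assume "\<exists>i. \<not> \<bar>(x + A *v y)$i\<bar> powr (1 / \<alpha> $ i) < \<psi> t"
      then obtain i where "\<not> \<bar>(x + A *v y)$i\<bar> powr (1 / \<alpha> $ i) < \<psi> t" by blast
      then have ge: "\<psi> t powr (\<alpha> $ i) \<le> \<bar>(x + A *v y)$i\<bar>"
        using powr_lt_iff[of "\<bar>(x + A *v y)$i\<bar>" "\<alpha> $ i" "\<psi> t"] a t by auto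
      have "exp (- (w * R)) \<le> exp (- (real CARD('m) * \<alpha> $ i * R))"
        using mult_right_mono[OF w(1)[rule_format, of i] R0] by simp
      also have "\<dots> = exp (\<alpha> $ i * s) * \<psi> t powr (\<alpha> $ i)" unfolding R_def by (rule fst_id[OF t(1,2) s, symmetric])
      also have "\<dots> \<le> exp (\<alpha> $ i * s) * \<bar>(x + A *v y)$i\<bar>" using ge by simp
      also have "\<dots> = \<bar>fst v $ i\<bar>" using xy by (simp add: abs_mult)
      also have "\<dots> \<le> supn v" by (rule supn_ge_fst)
      finally show ?thesis .
    next
      assume "\<exists>j. \<not> \<bar>y$j\<bar> powr (1 / \<beta> $ j) < t"
      then obtain j where "\<not> \<bar>y$j\<bar> powr (1 / \<beta> $ j) < t" by blast
      then have ge: "t powr (\<beta> $ j) \<le> \<bar>y$j\<bar>"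
        using powr_lt_iff[of "\<bar>y$j\<bar>" "\<beta> $ j" t] b t by auto
      have "exp (- (w * R)) \<le> exp (- (real CARD('n) * \<beta> $ j * R))"
        using mult_right_mono[OF w(2)[rule_format, of j] R0] by simp
      also have "\<dots> = exp (- (\<beta> $ j * s)) * t powr (\<beta> $ j)" unfolding R_def by (rule snd_id[OF t(1,2) s, symmetric])
      also have "\<dots> \<le> exp (- (\<beta> $ j * s)) * \<bar>y$j\<bar>" using ge by simp
      also have "\<dots> = \<bar>snd v $ j\<bar>" using xy by (simp add: abs_mult)
      also have "\<dots> \<le> supn v" by (rule supn_ge_snd)
      finally show ?thesis .
    qed
  qed
  moreover have sp: "supn v > 0" using vL supn_pos by blast
  ultimately have "- (w * R) \<le> ln (supn v)" by (metis exp_gt_zero ln_exp ln_le_cancel_iff)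
  then show "ln (1 / supn v) \<le> w * rr CARD('m) CARD('n) \<psi> t" using ln_one_div[OF sp] unfolding R_def by linarith
qed



lemma stime_strict:
  assumes m: "m > 0" and t0: "t0 > 0" and psi_pos: "\<forall>t\<ge>t0. \<psi> t > 0"
    and psi_decr: "\<forall>t1 t2. t0 \<le> t1 \<and> t1 \<le> t2 \<longrightarrow> \<psi> t2 \<le> \<psi> t1"
    and t: "t0 \<le> t1" "t1 < t2"
  shows "stime m n \<psi> t1 < stime m n \<psi> t2"
proof -
  have d: "real (m + n) > 0" using m by simp
  have "ln t1 < ln t2" using t t0 by simp
  then have a: "real m / real (m + n) * ln t1 < real m / real (m + n) * ln t2"
    using m d by (intro mult_strict_left_mono) auto
  have "ln (\<psi> t2) \<le> ln (\<psi> t1)" using psi_pos psi_decr t by simp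
  then have b: "real n / real (m + n) * ln (\<psi> t2) \<le> real n / real (m + n) * ln (\<psi> t1)"
    using d by (intro mult_left_mono) auto
  show ?thesis unfolding stime_def using a b by linarith
qed

lemma stime_ge_ln:
  assumes m: "m > 0" and t0: "t0 > 0" and psi_pos: "\<forall>t\<ge>t0. \<psi> t > 0"
    and psi_b: "\<forall>t\<ge>t0. \<psi> t < 1 / t" and t: "t \<ge> t0"
  shows "ln t \<le> stime m n \<psi> t"
proof -
  have d: "real (m + n) > 0" using m by simp
  have tp: "t > 0" using t t0 by simp
  have "ln (\<psi> t) \<le> ln (1 / t)" using psi_pos psi_b t tp by (simp add: less_imp_le)
  then have l: "ln (\<psi> t) \<le> - ln t" using tp by (simp add: ln_div)
  have "real n / real (m + n) * ln (\<psi> t) \<le> real n / real (m + n) * (- ln t)"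
    using l d by (intro mult_left_mono) auto
  moreover have "real m / real (m + n) * ln t + real n / real (m + n) * ln t = real (m + n) / real (m + n) * ln t"
    by (simp only: of_nat_add add_divide_distrib distrib_right)
  moreover have "real (m + n) / real (m + n) * ln t = ln t" using d by simp
  moreover have "real n / real (m + n) * (- ln t) = - (real n / real (m + n) * ln t)" by simp
  ultimately have "ln t \<le> real m / real (m + n) * ln t - real n / real (m + n) * ln (\<psi> t)"
    by (smt (verit))
  then show ?thesis unfolding stime_def .
qed

lemma tfun_spec:
  assumes m: "m > 0" and t0: "t0 > 0" and psi_cont: "continuous_on {t0..} \<psi>" and psi_pos: "\<forall>t\<ge>t0. \<psi> t > 0"
    and psi_decr: "\<forall>t1 t2. t0 \<le> t1 \<and> t1 \<le> t2 \<longrightarrow> \<psi> t2 \<le> \<psi> t1"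
    and psi_b: "\<forall>t\<ge>t0. \<psi> t < 1 / t" and s: "s \<ge> stime m n \<psi> t0"
  shows "t0 \<le> tfun m n \<psi> t0 s \<and> s = stime m n \<psi> (tfun m n \<psi> t0 s)"
proof -
  define T where "T = max t0 (exp s)"
  have T: "t0 \<le> T" unfolding T_def by simp
  have "s \<le> ln T" unfolding T_def by (metis ln_exp ln_le_cancel_iff exp_gt_zero max.cobounded2 max.strict_coboundedI2)
  also have "\<dots> \<le> stime m n \<psi> T" by (rule stime_ge_ln[OF m t0 psi_pos psi_b T])
  finally have sT: "s \<le> stime m n \<psi> T" .
  have cont: "continuous_on {t0..T} (stime m n \<psi>)"
  proof -
    have c1: "continuous_on {t0..T} \<psi>" using psi_cont by (rule continuous_on_subset) auto
    show ?thesis unfolding stime_def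
      by (intro continuous_intros c1) (use t0 psi_pos in auto)
  qed
  obtain x where x: "t0 \<le> x" "x \<le> T" "stime m n \<psi> x = s"
    using IVT'[of "stime m n \<psi>" t0 s T, OF s sT T cont] by blast
  have ex: "\<exists>!t. t0 \<le> t \<and> s = stime m n \<psi> t"
  proof (rule ex1I[of _ x])
    show "t0 \<le> x \<and> s = stime m n \<psi> x" using x by simp
  next
    fix y assume y: "t0 \<le> y \<and> s = stime m n \<psi> y"
    show "y = x"
    proof (rule ccontr)
      assume "y \<noteq> x"
      then consider "y < x" | "x < y" by linarith
      then show False
      proof cases
        case 1 then show False using stime_strict[OF m t0 psi_pos psi_decr, of y x n] y x by simp
      next
        case 2 then show False using stime_strict[OF m t0 psi_pos psi_decr, of x y n] y x by simp
      qed
    qed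
  qed
  show ?thesis unfolding tfun_def by (rule theI'[OF ex])
qed

lemma tfun_stime:
  assumes m: "m > 0" and t0: "t0 > 0" and psi_pos: "\<forall>t\<ge>t0. \<psi> t > 0"
    and psi_decr: "\<forall>t1 t2. t0 \<le> t1 \<and> t1 \<le> t2 \<longrightarrow> \<psi> t2 \<le> \<psi> t1"
    and t: "t \<ge> t0"
  shows "tfun m n \<psi> t0 (stime m n \<psi> t) = t"
  unfolding tfun_def
proof (rule the_equality)
  show "t0 \<le> t \<and> stime m n \<psi> t = stime m n \<psi> t" using t by simp
next
  fix y assume y: "t0 \<le> y \<and> stime m n \<psi> t = stime m n \<psi> y"
  show "y = t"
  proof (rule ccontr)
    assume "y \<noteq> t"
    then consider "y < t" | "t < y" by linarith
    then show False
    proof cases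
      case 1 then show False using stime_strict[OF m t0 psi_pos psi_decr, of y t n] y by simp
    next
      case 2 then show False using stime_strict[OF m t0 psi_pos psi_decr, of t y n] y t by simp
    qed
  qed
qed

lemma rfun_rr: "rfun m n \<psi> t0 s = rr m n \<psi> (tfun m n \<psi> t0 s)"
  unfolding rfun_def rr_def by simp

lemma gflow_zero: "gflow \<alpha> \<beta> 0 v = v"
  by (simp add: gflow_def vec_eq_iff prod_eq_iff)



theorem lemma3p5:
  fixes \<alpha> :: "real^'m" and \<beta> :: "real^'n" and \<psi> :: "real \<Rightarrow> real"
    and t0 C\<psi> \<eta> Cr sstar :: real
  assumes alpha_pos: "\<forall>i. \<alpha> $ i > 0" and alpha_sum: "(\<Sum>i\<in>UNIV. \<alpha> $ i) = 1"
    and beta_pos: "\<forall>j. \<beta> $ j > 0" and beta_sum: "(\<Sum>j\<in>UNIV. \<beta> $ j) = 1"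
    and t0: "t0 > 1"
    and psi_cont: "continuous_on {t0..} \<psi>"
    and psi_pos: "\<forall>t\<ge>t0. \<psi> t > 0"
    and psi_decr: "\<forall>t1 t2. t0 \<le> t1 \<and> t1 \<le> t2 \<longrightarrow> \<psi> t2 \<le> \<psi> t1"
    and psi_bounds: "\<forall>t\<ge>t0. 1 / (2 * t) \<le> \<psi> t \<and> \<psi> t < 1 / t"
    and Cpsi: "C\<psi> \<ge> 1" and eta: "0 < \<eta>" "\<eta> < 1"
    and F_cond: "\<forall>t1 t2. t0 \<le> t1 \<and> t1 \<le> t2 \<and> t2 \<le> t1 * exp ((ln t1) powr \<eta>) \<longrightarrow>
                   1 - t2 * \<psi> t2 \<le> C\<psi> * (1 - t1 * \<psi> t1)"
    and Cr: "Cr \<ge> 1"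
    and r_cond: "\<forall>s1 s2. max sstar (stime CARD('m) CARD('n) \<psi> t0) \<le> s1 \<and> s1 \<le> s2 \<and> s2 \<le> s1 + s1 powr \<eta> \<longrightarrow>
                   rfun CARD('m) CARD('n) \<psi> t0 s2 \<le> Cr * rfun CARD('m) CARD('n) \<psi> t0 s1"
  shows "{A :: real^'n^'m. \<exists>\<^sub>F k in sequentially. stime CARD('m) CARD('n) \<psi> t0 \<le> real k \<and>
            gflow \<alpha> \<beta> (real k) ` LambdaA A \<in>
              Delta_tilde \<alpha> \<beta> (omega2 \<alpha> \<beta> / Cr * rfun CARD('m) CARD('n) \<psi> t0 (real k + 1))}
           \<subseteq> - DI \<alpha> \<beta> \<psi>
       \<and> - DI \<alpha> \<beta> \<psi> \<subseteq>
         {A :: real^'n^'m. \<exists>\<^sub>F k in sequentially. stime CARD('m) CARD('n) \<psi> t0 \<le> real k \<and>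
            gflow \<alpha> \<beta> (real k) ` LambdaA A \<in>
              Delta_tilde \<alpha> \<beta> (omega1 \<alpha> \<beta> * Cr * rfun CARD('m) CARD('n) \<psi> t0 (real k))}"
proof -
  have mpos: "CARD('m) > 0" by simp
  have a1: "\<forall>i. 0 < \<alpha> $ i \<and> \<alpha> $ i \<le> 1"
  proof
    fix i
    have "\<alpha> $ i \<le> (\<Sum>i\<in>UNIV. \<alpha> $ i)"
      by (rule member_le_sum) (use alpha_pos less_imp_le in auto)
    then show "0 < \<alpha> $ i \<and> \<alpha> $ i \<le> 1" using alpha_pos alpha_sum by auto
  qed
  have b1: "\<forall>j. 0 < \<beta> $ j \<and> \<beta> $ j \<le> 1"
  proof
    fix j
    have "\<beta> $ j \<le> (\<Sum>j\<in>UNIV. \<beta> $ j)"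
      by (rule member_le_sum) (use beta_pos less_imp_le in auto)
    then show "0 < \<beta> $ j \<and> \<beta> $ j \<le> 1" using beta_pos beta_sum by auto
  qed
  have t0p: "t0 > 0" using t0 by simp
  have psi_b: "\<forall>t\<ge>t0. \<psi> t < 1 / t" using psi_bounds by blast
  have tpsi: "t > 0 \<and> \<psi> t > 0 \<and> t * \<psi> t \<le> 1" if "t \<ge> t0" for t
  proof -
    have tp: "t > 0" using that t0 by simp
    have "\<psi> t < 1 / t" using psi_b that by blast
    then have "t * \<psi> t < t * (1 / t)" using tp by (intro mult_strict_left_mono) auto
    then show ?thesis using tp psi_pos that by simp
  qed
  define U where "U = range (\<lambda>i. real CARD('m) * \<alpha> $ i) \<union> range (\<lambda>j. real CARD('n) * \<beta> $ j)"
  have finU: "finite U" "U \<noteq> {}" unfolding U_def by auto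
  have w2: "\<forall>i. omega2 \<alpha> \<beta> \<le> real CARD('m) * \<alpha> $ i" "\<forall>j. omega2 \<alpha> \<beta> \<le> real CARD('n) * \<beta> $ j"
    unfolding omega2_def U_def[symmetric] using finU by (auto intro!: Min_le simp: U_def)
  have w1: "\<forall>i. real CARD('m) * \<alpha> $ i \<le> omega1 \<alpha> \<beta>" "\<forall>j. real CARD('n) * \<beta> $ j \<le> omega1 \<alpha> \<beta>"
    unfolding omega1_def U_def[symmetric] using finU by (auto intro!: Max_ge simp: U_def)
  have w2pos: "omega2 \<alpha> \<beta> > 0"
    unfolding omega2_def U_def[symmetric] using finU alpha_pos beta_pos
    by (subst Min_gr_iff) (auto simp: U_def)
  have w1nn: "omega1 \<alpha> \<beta> \<ge> 0"
  proof -
    have "0 < real CARD('m) * \<alpha> $ undefined" using alpha_pos by simp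
    then show ?thesis using w1(1) by (meson less_imp_le order_trans)
  qed
  define S0 where "S0 = stime CARD('m) CARD('n) \<psi> t0"
  define G where "G A t = (\<exists>p q. p \<in> intvecs \<and> q \<in> intvecs \<and> q \<noteq> 0 \<and>
      (\<forall>i. \<bar>(A *v q - p) $ i\<bar> powr (1 / \<alpha> $ i) < \<psi> t) \<and>
      (\<forall>j. \<bar>q $ j\<bar> powr (1 / \<beta> $ j) < t))" for A :: "real^'n^'m" and t
  have DIeq: "A \<in> DI \<alpha> \<beta> \<psi> \<longleftrightarrow> (\<exists>T. \<forall>t\<ge>T. G A t)" for A
    unfolding DI_def G_def eventually_at_top_linorder by simp
  show ?thesis
  proof (intro conjI subsetI)
    fix A :: "real^'n^'m"
    assume "A \<in> {A :: real^'n^'m. \<exists>\<^sub>F k in sequentially. stime CARD('m) CARD('n) \<psi> t0 \<le> real k \<and>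
            gflow \<alpha> \<beta> (real k) ` LambdaA A \<in>
              Delta_tilde \<alpha> \<beta> (omega2 \<alpha> \<beta> / Cr * rfun CARD('m) CARD('n) \<psi> t0 (real k + 1))}"
    then have fr: "\<forall>N. \<exists>k\<ge>N. S0 \<le> real k \<and> gflow \<alpha> \<beta> (real k) ` LambdaA A \<in>
              Delta_tilde \<alpha> \<beta> (omega2 \<alpha> \<beta> / Cr * rfun CARD('m) CARD('n) \<psi> t0 (real k + 1))"
      unfolding S0_def frequently_sequentially by simp
    show "A \<in> - DI \<alpha> \<beta> \<psi>"
    proof
      assume "A \<in> DI \<alpha> \<beta> \<psi>"
      then obtain T where T: "\<forall>t\<ge>T. G A t" using DIeq by blast
      define T' where "T' = max T t0"
      have T't0: "t0 \<le> T'" unfolding T'_def by simp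
      obtain k where k: "k \<ge> nat \<lceil>max (max sstar 1) (stime CARD('m) CARD('n) \<psi> T')\<rceil>"
        and Pk1: "S0 \<le> real k"
        and Pk2: "gflow \<alpha> \<beta> (real k) ` LambdaA A \<in>
              Delta_tilde \<alpha> \<beta> (omega2 \<alpha> \<beta> / Cr * rfun CARD('m) CARD('n) \<psi> t0 (real k + 1))"
        using fr by blast
      have "max (max sstar 1) (stime CARD('m) CARD('n) \<psi> T') \<le> real k"
        using k by linarith
      then have kb: "sstar \<le> real k" "1 \<le> real k" "stime CARD('m) CARD('n) \<psi> T' \<le> real k" by auto
      from Pk2 obtain s' L where s': "s' \<in> {0..<1}"
        and L: "Delta L \<in> {0..omega2 \<alpha> \<beta> / Cr * rfun CARD('m) CARD('n) \<psi> t0 (real k + 1)}"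
        and eqL: "gflow \<alpha> \<beta> (real k) ` LambdaA A = gflow \<alpha> \<beta> (- s') ` L"
        unfolding Delta_tilde_def by blast
      define \<sigma> where "\<sigma> = real k + s'"
      have Leq: "L = gflow \<alpha> \<beta> \<sigma> ` LambdaA A"
      proof -
        have "gflow \<alpha> \<beta> s' ` (gflow \<alpha> \<beta> (real k) ` LambdaA A) = gflow \<alpha> \<beta> s' ` (gflow \<alpha> \<beta> (- s') ` L)"
          using eqL by simp
        then show ?thesis unfolding gflow_image_add \<sigma>_def by (simp add: gflow_zero add.commute)
      qed
      have \<sigma>b: "S0 \<le> \<sigma>" "1 \<le> \<sigma>" "sstar \<le> \<sigma>" "\<sigma> \<le> real k + 1" "real k \<le> \<sigma>"
        using s' Pk1 kb unfolding \<sigma>_def by auto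
      define tt where "tt = tfun CARD('m) CARD('n) \<psi> t0 \<sigma>"
      have tt: "t0 \<le> tt" "\<sigma> = stime CARD('m) CARD('n) \<psi> tt"
        using tfun_spec[OF mpos t0p psi_cont psi_pos psi_decr psi_b, where s=\<sigma> and n="CARD('n)"] \<sigma>b(1)
        unfolding tt_def S0_def by auto
      have "T \<le> tt"
      proof (rule ccontr)
        assume "\<not> T \<le> tt"
        then have "tt < T'" unfolding T'_def by simp
        then have "stime CARD('m) CARD('n) \<psi> tt < stime CARD('m) CARD('n) \<psi> T'"
          by (rule stime_strict[OF mpos t0p psi_pos psi_decr tt(1)])
        then show False using tt(2) kb(3) \<sigma>b(5) by linarith
      qed
      then have Gtt: "G A tt" using T by blast
      have "1 \<le> \<sigma> powr \<eta>" using \<sigma>b(2) eta by (simp add: ge_one_powr_ge_zero)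
      then have "real k + 1 \<le> \<sigma> + \<sigma> powr \<eta>" using \<sigma>b(5) by linarith
      moreover have "max sstar S0 \<le> \<sigma>" using \<sigma>b by simp
      ultimately have "rfun CARD('m) CARD('n) \<psi> t0 (real k + 1) \<le> Cr * rfun CARD('m) CARD('n) \<psi> t0 \<sigma>"
        using r_cond[rule_format, of \<sigma> "real k + 1"] \<sigma>b(4) unfolding S0_def by blast
      then have "omega2 \<alpha> \<beta> / Cr * rfun CARD('m) CARD('n) \<psi> t0 (real k + 1) \<le>
           omega2 \<alpha> \<beta> / Cr * (Cr * rfun CARD('m) CARD('n) \<psi> t0 \<sigma>)"
        using w2pos Cr by (intro mult_left_mono) auto
      also have "\<dots> = omega2 \<alpha> \<beta> * rr CARD('m) CARD('n) \<psi> tt"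
        using Cr unfolding rfun_rr tt_def by simp
      finally have Lle: "Delta L \<le> omega2 \<alpha> \<beta> * rr CARD('m) CARD('n) \<psi> tt" using L by simp
      from Gtt obtain p q where pq: "p \<in> intvecs" "q \<in> intvecs" "q \<noteq> 0"
        "\<forall>i. \<bar>(A *v q - p)$i\<bar> powr (1 / \<alpha> $ i) < \<psi> tt" "\<forall>j. \<bar>q$j\<bar> powr (1 / \<beta> $ j) < tt"
        unfolding G_def by blast
      have tp: "tt > 0" "\<psi> tt > 0" "tt * \<psi> tt \<le> 1" using tpsi[OF tt(1)] by auto
      have "omega2 \<alpha> \<beta> * rr CARD('m) CARD('n) \<psi> tt < Delta (gflow \<alpha> \<beta> \<sigma> ` LambdaA A)"
        by (rule good_Delta[OF a1 b1 tp tt(2) w2 pq])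
      then show False using Lle Leq by simp
    qed
  next
    fix A :: "real^'n^'m"
    assume "A \<in> - DI \<alpha> \<beta> \<psi>"
    then have nev: "\<forall>T. \<exists>t\<ge>T. \<not> G A t" using DIeq by auto
    show "A \<in> {A :: real^'n^'m. \<exists>\<^sub>F k in sequentially. stime CARD('m) CARD('n) \<psi> t0 \<le> real k \<and>
            gflow \<alpha> \<beta> (real k) ` LambdaA A \<in>
              Delta_tilde \<alpha> \<beta> (omega1 \<alpha> \<beta> * Cr * rfun CARD('m) CARD('n) \<psi> t0 (real k))}"
      unfolding mem_Collect_eq frequently_sequentially S0_def[symmetric]
    proof (intro allI)
      fix N :: nat
      define T where "T = max t0 (exp (real N + max sstar 1 + \<bar>S0\<bar> + 1))"
      obtain t where t: "t \<ge> T" "\<not> G A t" using nev by blast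
      have tt0: "t \<ge> t0" using t unfolding T_def by simp
      have tp: "t > 0" "\<psi> t > 0" "t * \<psi> t \<le> 1" using tpsi[OF tt0] by auto
      define s where "s = stime CARD('m) CARD('n) \<psi> t"
      have "exp (real N + max sstar 1 + \<bar>S0\<bar> + 1) \<le> t" using t unfolding T_def by simp
      then have "real N + max sstar 1 + \<bar>S0\<bar> + 1 \<le> ln t"
        by (metis exp_gt_zero ln_exp ln_le_cancel_iff order_less_le_trans)
      also have "ln t \<le> s" unfolding s_def by (rule stime_ge_ln[OF mpos t0p psi_pos psi_b tt0])
      finally have sb: "real N + max sstar 1 + \<bar>S0\<bar> + 1 \<le> s" .
      have mx: "1 \<le> max sstar 1" "sstar \<le> max sstar 1" by simp_all
      have ab: "0 \<le> \<bar>S0\<bar>" "S0 \<le> \<bar>S0\<bar>" by simp_all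
      have s_nn: "0 \<le> s" using sb mx ab by linarith
      define k where "k = nat \<lfloor>s\<rfloor>"
      have kfl: "real k \<le> s" "s < real k + 1" unfolding k_def using s_nn by linarith+
      have "real N < real k + 1" using kfl sb mx ab by linarith
      then have kN: "k \<ge> N" by linarith
      have kb: "S0 \<le> real k" "sstar \<le> real k" "1 \<le> real k" using kfl sb mx ab by linarith+
      define s' where "s' = s - real k"
      have s': "s' \<in> {0..<1}" using kfl unfolding s'_def by auto
      define L where "L = gflow \<alpha> \<beta> s ` LambdaA A"
      have eq: "gflow \<alpha> \<beta> (real k) ` LambdaA A = gflow \<alpha> \<beta> (- s') ` L"
        unfolding L_def gflow_image_add s'_def by simp
      have D0: "0 \<le> Delta L" unfolding L_def by (rule Delta_nonneg[OF a1 b1 alpha_sum beta_sum s_nn])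
      have "Delta L \<le> omega1 \<alpha> \<beta> * rr CARD('m) CARD('n) \<psi> t"
        unfolding L_def by (rule notgood_Delta[OF a1 b1 tp s_def s_nn w1 w1nn]) (use t(2) in \<open>simp add: G_def\<close>)
      also have "rr CARD('m) CARD('n) \<psi> t = rfun CARD('m) CARD('n) \<psi> t0 s"
        unfolding rfun_rr s_def using tfun_stime[OF mpos t0p psi_pos psi_decr tt0] by simp
      also have "rfun CARD('m) CARD('n) \<psi> t0 s \<le> Cr * rfun CARD('m) CARD('n) \<psi> t0 (real k)"
      proof -
        have "1 \<le> real k powr \<eta>" using kb(3) eta by (simp add: ge_one_powr_ge_zero)
        then have "s \<le> real k + real k powr \<eta>" using kfl by linarith
        moreover have "max sstar S0 \<le> real k" using kb by simp
        ultimately show ?thesis using r_cond[rule_format, of "real k" s] kfl(1) unfolding S0_def by blast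
      qed
      finally have "Delta L \<le> omega1 \<alpha> \<beta> * (Cr * rfun CARD('m) CARD('n) \<psi> t0 (real k))"
        using w1nn by (simp add: mult_left_mono)
      then have DL: "Delta L \<in> {0..omega1 \<alpha> \<beta> * Cr * rfun CARD('m) CARD('n) \<psi> t0 (real k)}"
        using D0 by (simp add: mult.assoc)
      have "gflow \<alpha> \<beta> (real k) ` LambdaA A \<in>
              Delta_tilde \<alpha> \<beta> (omega1 \<alpha> \<beta> * Cr * rfun CARD('m) CARD('n) \<psi> t0 (real k))"
        unfolding Delta_tilde_def using s' DL eq by blast
      then show "\<exists>k\<ge>N. S0 \<le> real k \<and> gflow \<alpha> \<beta> (real k) ` LambdaA A \<in>
              Delta_tilde \<alpha> \<beta> (omega1 \<alpha> \<beta> * Cr * rfun CARD('m) CARD('n) \<psi> t0 (real k))"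
        using kN kb(1) by blast
    qed
  qed
qed

end
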